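(* Let $K$ be a complex K3 surface with $\mathrm{Pic}(K)=\mathbb{Z}h$ and $h^2=2d$. Let $\alpha\in Br(K)_2$ and let $B\in\frac12H^2(K,\mathbb{Z})\subset H^2(K,\mathbb{Q})$ be a B-field representing $\alpha$. If $4Bh+h^2\equiv 0\pmod 4$, then $B^2 \bmod \mathbb{Z}$ is an invariant of $\alpha$, i.e. it is the same for every B-field representative of $\alpha$.
   Context: A B-field representative of $\alpha\in Br(K)_2=H^2(K,\mathcal{O}_K^* )_{2}$ is a class $B\in\frac12 H^2(K,\mathbb{Z})$ whose image in $H^2(K,\mathcal{O}_K)$ maps to $\alpha$ via the exponential sequence; two B-fields represent the same class iff they differ by an element of $H^2(K,\mathbb{Z})+\frac12\mathrm{Pic}(K)$. Intersection numbers are extended $\mathbb{Q}$-bilinearly. *)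

theory Defs
  imports Main "HOL.Rat"
begin

text \<open>The K3 lattice H^2(K,Z) = U^3 (+) E8(-1)^2, realised on Z^22 (indices 0..21).
  Classes in H^2(K,Q) are rational vectors nat => rat supported on {0..<22}.\<close>

definition e8_adj :: "nat \<Rightarrow> nat \<Rightarrow> bool" where
  "e8_adj a b \<longleftrightarrow> (\<exists>k<6. (a = k \<and> b = Suc k) \<or> (b = k \<and> a = Suc k))
                   \<or> (a = 4 \<and> b = 7) \<or> (a = 7 \<and> b = 4)"

definition e8_neg :: "nat \<Rightarrow> nat \<Rightarrow> int" where
  "e8_neg a b = (if a = b then -2 else if e8_adj a b then 1 else 0)"

definition k3_gram :: "nat \<Rightarrow> nat \<Rightarrow> int" where
  "k3_gram i j =
     (if i < 6 \<and> j < 6 then (if i div 2 = j div 2 \<and> i \<noteq> j then 1 else 0)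
      else if 6 \<le> i \<and> i < 14 \<and> 6 \<le> j \<and> j < 14 then e8_neg (i - 6) (j - 6)
      else if 14 \<le> i \<and> i < 22 \<and> 14 \<le> j \<and> j < 22 then e8_neg (i - 14) (j - 14)
      else 0)"

definition k3_int :: "(nat \<Rightarrow> rat) \<Rightarrow> (nat \<Rightarrow> rat) \<Rightarrow> rat" where
  "k3_int v w = (\<Sum>i<22. \<Sum>j<22. of_int (k3_gram i j) * v i * w j)"

definition H2Q :: "(nat \<Rightarrow> rat) set" where
  "H2Q = {v. \<forall>i\<ge>22. v i = 0}"

definition H2Z :: "(nat \<Rightarrow> rat) set" where
  "H2Z = {v \<in> H2Q. \<forall>i<22. v i \<in> \<int>}"

definition half_H2Z :: "(nat \<Rightarrow> rat) set" where
  "half_H2Z = {v \<in> H2Q. (\<lambda>i. 2 * v i) \<in> H2Z}"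

definition primitive_class :: "(nat \<Rightarrow> rat) \<Rightarrow> bool" where
  "primitive_class h \<longleftrightarrow> h \<in> H2Z \<and>
     (\<forall>(n::int) v. v \<in> H2Z \<and> h = (\<lambda>i. of_int n * v i) \<longrightarrow> \<bar>n\<bar> = 1)"

text \<open>Two B-fields represent the same Brauer class iff they differ by an element of
  H^2(K,Z) + 1/2 Pic(K), with Pic(K) = Z h.\<close>
definition same_brauer_class :: "(nat \<Rightarrow> rat) \<Rightarrow> (nat \<Rightarrow> rat) \<Rightarrow> (nat \<Rightarrow> rat) \<Rightarrow> bool" where
  "same_brauer_class h B B' \<longleftrightarrow>
     (\<exists>x\<in>H2Z. \<exists>k::int. \<forall>i. B' i - B i = x i + of_int k / 2 * h i)"

end

theory Submission
  imports Defs
begin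

lemma e8_adj_sym: "e8_adj a b = e8_adj b a"
  unfolding e8_adj_def by blast

lemma e8_neg_sym: "e8_neg a b = e8_neg b a"
  unfolding e8_neg_def by (simp add: e8_adj_sym eq_commute[of a])

lemma k3_gram_sym: "k3_gram i j = k3_gram j i"
  unfolding k3_gram_def using e8_neg_sym by (simp add: eq_commute[of "i div 2"] eq_commute[of i])

lemma k3_int_sym: "k3_int v w = k3_int w v"
  unfolding k3_int_def
  by (subst sum.swap) (simp add: k3_gram_sym mult.commute mult.left_commute)

lemma k3_int_add_left: "k3_int (\<lambda>i. v i + w i) u = k3_int v u + k3_int w u"
  unfolding k3_int_def by (simp add: algebra_simps sum.distrib)

lemma k3_int_add_right: "k3_int u (\<lambda>i. v i + w i) = k3_int u v + k3_int u w"
  unfolding k3_int_def by (simp add: algebra_simps sum.distrib)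

lemma k3_int_scale_left: "k3_int (\<lambda>i. c * v i) w = c * k3_int v w"
  unfolding k3_int_def by (simp add: algebra_simps sum_distrib_left)

lemma k3_int_scale_right: "k3_int v (\<lambda>i. c * w i) = c * k3_int v w"
  unfolding k3_int_def by (simp add: algebra_simps sum_distrib_left)

lemma k3_int_Ints:
  assumes "\<And>i. i < 22 \<Longrightarrow> v i \<in> \<int>" "\<And>i. i < 22 \<Longrightarrow> w i \<in> \<int>"
  shows "k3_int v w \<in> \<int>"
  unfolding k3_int_def using assms
  by (intro Ints_sum Ints_mult) auto

theorem lemma2p1:
  fixes h B B' :: "nat \<Rightarrow> rat" and d :: int
  assumes "primitive_class h"
    and "d > 0"
    and "k3_int h h = of_int (2 * d)"
    and "B \<in> half_H2Z" and "B' \<in> half_H2Z"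
    and "same_brauer_class h B B'"
    and "(4 * k3_int B h + k3_int h h) / 4 \<in> \<int>"
  shows "k3_int B' B' - k3_int B B \<in> \<int>"
proof -
  obtain x k where x: "x \<in> H2Z" and xk: "\<And>i. B' i - B i = x i + of_int k / 2 * h i"
    using assms(6) unfolding same_brauer_class_def by blast
  have hZ: "\<And>i. i < 22 \<Longrightarrow> h i \<in> \<int>" using assms(1) unfolding primitive_class_def H2Z_def by auto
  have xZ: "\<And>i. i < 22 \<Longrightarrow> x i \<in> \<int>" using x unfolding H2Z_def by auto
  have BZ: "\<And>i. i < 22 \<Longrightarrow> 2 * B i \<in> \<int>" using assms(4) unfolding half_H2Z_def H2Z_def by auto
  define c :: rat where "c = of_int k / 2"
  have B'eq: "B' = (\<lambda>i. B i + (x i + c * h i))"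
    using xk unfolding c_def by (auto simp: algebra_simps)
  have exp: "k3_int B' B' = k3_int B B + k3_int x x + c*c * k3_int h h
     + 2 * k3_int B x + 2 * c * k3_int B h + 2 * c * k3_int x h"
    unfolding B'eq
    by (simp add: k3_int_add_left k3_int_add_right k3_int_scale_left k3_int_scale_right
        k3_int_sym[of x B] k3_int_sym[of h B] k3_int_sym[of h x] algebra_simps)
  have i1: "k3_int x x \<in> \<int>" by (rule k3_int_Ints) (simp_all add: xZ)
  have i2: "2 * k3_int B x \<in> \<int>" 
  proof -
    have "k3_int (\<lambda>i. 2 * B i) x \<in> \<int>" by (rule k3_int_Ints) (simp_all add: BZ xZ)
    then show ?thesis by (simp add: k3_int_scale_left)
  qed
  have i3: "2 * c * k3_int x h \<in> \<int>"
  proof -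
    have "k3_int x h \<in> \<int>" by (rule k3_int_Ints) (simp_all add: xZ hZ)
    then show ?thesis unfolding c_def by simp
  qed
  obtain m where m: "(4 * k3_int B h + k3_int h h) / 4 = of_int m" using assms(7) Ints_cases by metis
  have "c*c * k3_int h h + 2 * c * k3_int B h
        = of_int k * ((4 * k3_int B h + k3_int h h) / 4) + of_int (k*(k-1)) / 2 * of_int d"
    unfolding c_def assms(3) by (simp add: field_simps)
  also have "\<dots> = of_int (k * m + (k*(k-1)) div 2 * d)"
  proof -
    have "even (k*(k-1))" by simp
    then obtain q where q: "k*(k-1) = 2*q" by blast
    show ?thesis using m q by simp
  qed
  finally have i4: "c*c * k3_int h h + 2 * c * k3_int B h \<in> \<int>" by (metis Ints_of_int)
  have "k3_int B' B' - k3_int B B = k3_int x x + 2 * k3_int B x + 2 * c * k3_int x h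
      + (c*c * k3_int h h + 2 * c * k3_int B h)"
    unfolding exp by (simp add: algebra_simps)
  then show ?thesis using i1 i2 i3 i4 by (simp add: Ints_add)
qed

end
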